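(* Under the standing assumptions, if $1/4<a<b/27+1/3$ and $\theta\in(\pi/2,\pi)$ satisfies $-1<\cos\theta<-\frac{1}{2\sqrt a}$, then $\zeta(\theta)<0$.
   Context: Standing assumptions: $a,b\in\mathbb{R}$ with $b>0$, $1+a+b>0$, $9-27a+b>0$, $2-8a+8a^2+ab\ne0$, $b+1-a\ne0$. Let $f^*(\zeta,\theta)=(\zeta+2\cos\theta)(2\zeta\cos\theta+1)+b\zeta-a(\zeta+2\cos\theta)^3$. Under these assumptions, for each $\theta\in(\pi/2,\pi)$ the polynomial $f^*(\cdot,\theta)$ has exactly one real zero in $(-1,1)$; denote it $w(\theta)$ and set $\zeta(\theta)=1/w(\theta)$ (taken as $\infty$ when $w(\theta)=0$). *)

theory Defs
  imports Complex_Main "HOL-Library.Extended_Real"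
begin

definition fstar :: "real \<Rightarrow> real \<Rightarrow> real \<Rightarrow> real \<Rightarrow> real" where
  "fstar a b z \<theta> = (z + 2 * cos \<theta>) * (2 * z * cos \<theta> + 1) + b * z - a * (z + 2 * cos \<theta>) ^ 3"

definition standing_assms :: "real \<Rightarrow> real \<Rightarrow> bool" where
  "standing_assms a b \<longleftrightarrow> b > 0 \<and> 1 + a + b > 0 \<and> 9 - 27 * a + b > 0
     \<and> 2 - 8 * a + 8 * a^2 + a * b \<noteq> 0 \<and> b + 1 - a \<noteq> 0"

definition wfun :: "real \<Rightarrow> real \<Rightarrow> real \<Rightarrow> real" where
  "wfun a b \<theta> = (THE z. -1 < z \<and> z < 1 \<and> fstar a b z \<theta> = 0)"

definition zetafun :: "real \<Rightarrow> real \<Rightarrow> real \<Rightarrow> ereal" where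
  "zetafun a b \<theta> = (if wfun a b \<theta> = 0 then \<infinity> else ereal (1 / wfun a b \<theta>))"

end

theory Submission
  imports Defs
begin

lemma fstar_poly: "fstar a b z t = -a*z^3 + (2*cos t - 6*a*cos t)*z^2
   + (1 + 4*(cos t)^2 + b - 12*a*(cos t)^2)*z + (2*cos t - 8*a*(cos t)^3)"
  unfolding fstar_def by (simp add: algebra_simps power2_eq_square power3_eq_cube)

lemma cubic_split:
  fixes A B C D x p z :: real
  shows "A*x^3 + B*x^2 + C*x + D = (x-p)*(x-z)*(A*x + B + A*(p+z))
     + (A*(p^2+p*z+z^2)+B*(p+z)+C)*(x-p) + (A*p^3 + B*p^2 + C*p + D)"
  by (simp add: algebra_simps power2_eq_square power3_eq_cube)

lemma cubic_E:
  fixes A B C D p z :: real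
  assumes "A*p^3 + B*p^2 + C*p + D = 0" "A*z^3 + B*z^2 + C*z + D = 0" "p \<noteq> z"
  shows "A*(p^2+p*z+z^2)+B*(p+z)+C = 0"
proof -
  have "(p - z)*(A*(p^2+p*z+z^2)+B*(p+z)+C) =
     (A*p^3 + B*p^2 + C*p + D) - (A*z^3 + B*z^2 + C*z + D)"
    by (simp add: algebra_simps power2_eq_square power3_eq_cube)
  with assms show ?thesis by simp
qed

lemma cubic_unique:
  fixes A B C D p z a :: real
  defines "P \<equiv> \<lambda>x. A*x^3 + B*x^2 + C*x + D"
  assumes A: "A = -a" and a: "a > 0"
    and m1: "P (-1) < 0" and p1: "P 1 > 0"
    and r1: "P p = 0" and r: "P z = 0"
    and p: "-1 < p" "p < 1" and z: "-1 < z" "z < 1"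
  shows "p = z"
proof (rule ccontr)
  assume ne: "p \<noteq> z"
  have E: "A*(p^2+p*z+z^2)+B*(p+z)+C = 0"
    using cubic_E[of A p B C D z] r1 r ne unfolding P_def by auto
  define k where "k = B + A*(p+z)"
  have sp: "P x = (x-p)*(x-z)*(A*x + k)" for x
    using cubic_split[of A x B C D p z] E r1 unfolding P_def k_def by simp
  have "P (-1) = (1+p)*(1+z)*(k+a)" using sp[of "-1"] A by (simp add: algebra_simps)
  with m1 have "(1+p)*(1+z)*(k+a) < 0" by simp
  moreover have "(1+p)*(1+z) > 0" using p z by simp
  ultimately have k1: "k + a < 0" using p z by (simp add: mult_less_0_iff)
  have "P 1 = (1-p)*(1-z)*(k-a)" using sp[of 1] A by (simp add: algebra_simps)
  with p1 have "(1-p)*(1-z)*(k-a) > 0" by simp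
  moreover have "(1-p)*(1-z) > 0" using p z by simp
  ultimately have "k - a > 0" using p z by (simp add: zero_less_mult_iff)
  with k1 a show False by linarith
qed

theorem mainTheorem12:
  fixes a b \<theta> :: real
  assumes "standing_assms a b"
    and "1/4 < a" and "a < b/27 + 1/3"
    and "pi/2 < \<theta>" and "\<theta> < pi"
    and "-1 < cos \<theta>" and "cos \<theta> < - 1 / (2 * sqrt a)"
  shows "zetafun a b \<theta> < 0"
proof -
  define c where "c = cos \<theta>"
  have b0: "b > 0" using assms(1) unfolding standing_assms_def by simp
  have a0: "a > 0" using assms(2) by simp
  have sa: "sqrt a > 0" using a0 by simp
  have c1: "-1 < c" using assms(6) c_def by simp
  have c2: "c < - 1 / (2 * sqrt a)" using assms(7) c_def by simp
  have "-c * (2*sqrt a) > 1" using c2 sa by (simp add: field_simps)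
  hence "(-c * (2*sqrt a))^2 > 1^2" by (intro power_strict_mono) auto
  hence ac: "4*a*c^2 > 1" using a0 by (simp add: power_mult_distrib mult.commute)
  have "- 1 / (2 * sqrt a) < 0" using sa by simp
  hence cneg: "c < 0" using c2 by linarith
  define A where "A = -a"
  define B where "B = 2*c - 6*a*c"
  define C where "C = 1 + 4*c^2 + b - 12*a*c^2"
  define D where "D = 2*c - 8*a*c^3"
  define P where "P = (\<lambda>x::real. A*x^3 + B*x^2 + C*x + D)"
  have fP: "\<And>z. fstar a b z \<theta> = P z"
    unfolding fstar_poly P_def A_def B_def C_def D_def c_def by simp
  have P0: "P 0 > 0"
  proof -
    have "P 0 = 2*c*(1 - 4*a*c^2)" unfolding P_def D_def by (simp add: algebra_simps power3_eq_cube power2_eq_square)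
    moreover have "2*c*(1 - 4*a*c^2) > 0" using cneg ac by (simp add: mult_neg_neg)
    ultimately show ?thesis by simp
  qed
  have Pm1: "P (-1) < 0"
  proof -
    define s where "s = 2*c - 1"
    have u1: "-3 < s" "s < -1" using c1 cneg s_def by auto
    have eq: "P (-1) = - (s^2) - a*s^3 - b"
      unfolding P_def A_def B_def C_def D_def s_def by (simp add: algebra_simps power3_eq_cube power2_eq_square)
    define h where "h = (s-1) + a*(s^2-s+1)"
    define k where "k = (s-3) + a*(s^2-3*s+9)"
    have g1: "- (s^2) - a*s^3 - (a-1) = -(s+1)*h" unfolding h_def by (simp add: algebra_simps power3_eq_cube power2_eq_square)
    have g2: "- (s^2) - a*s^3 - (27*a-9) = -(s+3)*k" unfolding k_def by (simp add: algebra_simps power3_eq_cube power2_eq_square)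
    have kh: "k - h = -2 + a*(8 - 2*s)" unfolding k_def h_def by (simp add: algebra_simps)
    have "a*(8-2*s) > a*10" using a0 u1 by simp
    hence khp: "k > h" using kh assms(2) by linarith
    have bnd1: "a - 1 < b" using assms(3) b0 by linarith
    have bnd2: "27*a - 9 < b" using assms(3) by linarith
    show ?thesis
    proof (cases "h \<le> 0")
      case True
      have "-(s+1)*h \<le> 0" using True u1 by (simp add: mult_nonneg_nonpos)
      with g1 eq bnd1 show ?thesis by linarith
    next
      case False
      have "-(s+3)*k \<le> 0" using False khp u1 by (simp add: mult_nonpos_nonneg)
      with g2 eq bnd2 show ?thesis by linarith
    qed
  qed
  have P1: "P 1 > 0"
  proof -
    define r where "r = 2*c + 1"
    have v1: "-1 < r" "r < 1" using c1 cneg r_def by auto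
    have eq: "P 1 = r^2 - a*r^3 + b"
      unfolding P_def A_def B_def C_def D_def r_def by (simp add: algebra_simps power3_eq_cube power2_eq_square)
    have "r^2 - a*r^3 \<ge> min 0 (1-a)"
    proof (cases "r \<le> 0")
      case True
      have "r^2 - a*r^3 = r^2*(1 - a*r)" by (simp add: algebra_simps power3_eq_cube power2_eq_square)
      moreover have "a*r \<le> 0" using True a0 by (simp add: mult_nonneg_nonpos)
      hence "r^2*(1-a*r) \<ge> 0" by simp
      ultimately show ?thesis by simp
    next
      case False
      define h where "h = (r+1) - a*(r^2+r+1)"
      have g: "r^2 - a*r^3 - (1-a) = (r-1)*h" unfolding h_def by (simp add: algebra_simps power3_eq_cube power2_eq_square)
      show ?thesis
      proof (cases "h \<le> 0")
        case True
        have "(r-1)*h \<ge> 0" using True v1 by (simp add: mult_nonpos_nonpos)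
        with g show ?thesis by linarith
      next
        case hp: False
        have "a*r < 1"
        proof (rule ccontr)
          assume "\<not> a*r < 1"
          hence av: "a*r \<ge> 1" by simp
          have "a*r^2 = (a*r)*r" by (simp add: power2_eq_square)
          also have "\<dots> \<ge> 1*r" using av False by (intro mult_right_mono) auto
          finally have "a*r^2 \<ge> r" by simp
          with av a0 have "a*(r^2+r+1) > r+1" by (simp add: algebra_simps)
          with hp h_def show False by simp
        qed
        have "r^2 - a*r^3 = r^2*(1 - a*r)" by (simp add: algebra_simps power3_eq_cube power2_eq_square)
        moreover have "r^2*(1-a*r) \<ge> 0" using \<open>a*r<1\<close> by simp
        ultimately show ?thesis by simp
      qed
    qed
    moreover have "1 - a + b > 0" using assms(2,3) b0 by linarith
    ultimately show ?thesis using eq b0 by linarith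
  qed
  have cont: "continuous_on {-1..0} P" unfolding P_def by (intro continuous_intros)
  obtain w where w: "w \<in> {-1..0}" "P w = 0"
    using IVT'[of P "-1" 0 0] Pm1 P0 cont by force
  have wm: "-1 < w" "w < 0" using w Pm1 P0 by (auto simp: less_le)
  have uniq: "\<And>z. -1 < z \<and> z < 1 \<and> fstar a b z \<theta> = 0 \<Longrightarrow> z = w"
  proof -
    fix z assume "-1 < z \<and> z < 1 \<and> fstar a b z \<theta> = 0"
    thus "z = w" using cubic_unique[of A a B C D w z] A_def a0 Pm1 P1 w wm fP
      unfolding P_def by auto
  qed
  have "wfun a b \<theta> = w" unfolding wfun_def
    by (rule the_equality) (use wm w fP uniq in auto)
  thus ?thesis unfolding zetafun_def using wm by simp
qed

end
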